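(* Let $\Lambda$ be a $\sigma$-finite measure on $\mathcal Y\subseteq\mathbb R$, and let $\{p(y|x,\theta):\theta\in\Theta\}$, $\Theta\subseteq\mathbb R^m$ open, be a parametric family of positive conditional densities with respect to $\Lambda$, differentiable in $\theta$, such that differentiation in $\theta$ under the integral sign is permitted. Fix $\gamma\in\mathbb R\setminus\{0,-1\}$ and define the $\gamma$-expression $$p^{(\gamma)}(y|x,\theta)=\frac{p(y|x,\theta)^{\gamma+1}}{\int_{\mathcal Y}p(\tilde y|x,\theta)^{\gamma+1}\,\mathrm d\Lambda(\tilde y)}$$ (assumed well defined), the $\gamma$-loss $L_\gamma(\theta;\Lambda)=-\frac1n\frac1\gamma\sum_{i=1}^n\{p^{(\gamma)}(Y_i|X_i,\theta)\}^{\gamma/(\gamma+1)}$ and the $\gamma$-estimating function $S_\gamma(\theta;\Lambda)=\partial L_\gamma(\theta;\Lambda)/\partial\theta$. Suppose that, conditionally on $\underline X=(X_1,\dots,X_n)$, each $Y_i$ has density $p(\cdot|X_i,\theta_0)$ for some $\theta_0\in\Theta$. Then $\mathbb E_0[S_\gamma(\theta_0;\Lambda)\mid\underline X]=0$, where $\mathbb E_0$ denotes conditional expectation under these true distributions. *)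

theory Defs
  imports "HOL-Probability.Probability"
begin

text \<open>Conditional densities p x theta y, with x a covariate value, theta a parameter
  in R^m (modelled as real^'m) and y a response in the space of the measure Lambda.\<close>

definition gamma_norm :: "real measure \<Rightarrow> ('x \<Rightarrow> real^'m \<Rightarrow> real \<Rightarrow> real) \<Rightarrow> real
    \<Rightarrow> 'x \<Rightarrow> real^'m \<Rightarrow> real" where
  "gamma_norm Lam p \<gamma> x \<theta> = (\<integral>y. p x \<theta> y powr (\<gamma> + 1) \<partial>Lam)"

definition gamma_expr :: "real measure \<Rightarrow> ('x \<Rightarrow> real^'m \<Rightarrow> real \<Rightarrow> real) \<Rightarrow> real
    \<Rightarrow> 'x \<Rightarrow> real^'m \<Rightarrow> real \<Rightarrow> real" where
  "gamma_expr Lam p \<gamma> x \<theta> y = p x \<theta> y powr (\<gamma> + 1) / gamma_norm Lam p \<gamma> x \<theta>"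

definition gamma_loss :: "real measure \<Rightarrow> ('x \<Rightarrow> real^'m \<Rightarrow> real \<Rightarrow> real) \<Rightarrow> real
    \<Rightarrow> nat \<Rightarrow> (nat \<Rightarrow> 'x) \<Rightarrow> (nat \<Rightarrow> real) \<Rightarrow> real^'m \<Rightarrow> real" where
  "gamma_loss Lam p \<gamma> n X Y \<theta> =
     - (1 / real n) * (1 / \<gamma>) *
       (\<Sum>i<n. (gamma_expr Lam p \<gamma> (X i) \<theta> (Y i)) powr (\<gamma> / (\<gamma> + 1)))"

definition gamma_est :: "real measure \<Rightarrow> ('x \<Rightarrow> real^'m \<Rightarrow> real \<Rightarrow> real) \<Rightarrow> real
    \<Rightarrow> nat \<Rightarrow> (nat \<Rightarrow> 'x) \<Rightarrow> (nat \<Rightarrow> real) \<Rightarrow> real^'m \<Rightarrow> real^'m" where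
  "gamma_est Lam p \<gamma> n X Y \<theta> =
     (\<chi> j. frechet_derivative (gamma_loss Lam p \<gamma> n X Y) (at \<theta>) (axis j 1))"

definition diff_under_integral :: "real measure \<Rightarrow> (real^'m) set
    \<Rightarrow> ('x \<Rightarrow> real^'m \<Rightarrow> real \<Rightarrow> real) \<Rightarrow> bool" where
  "diff_under_integral Lam \<Theta> F \<longleftrightarrow>
     (\<forall>x. \<forall>\<theta>\<in>\<Theta>.
        (\<forall>h. integrable Lam (\<lambda>y. frechet_derivative (\<lambda>t. F x t y) (at \<theta>) h)) \<and>
        ((\<lambda>t. \<integral>y. F x t y \<partial>Lam) has_derivative
           (\<lambda>h. \<integral>y. frechet_derivative (\<lambda>t. F x t y) (at \<theta>) h \<partial>Lam)) (at \<theta>))"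

end

theory Submission
  imports Defs
begin

theorem mainTheorem5:
  fixes Lam :: "real measure"
    and \<Theta> :: "(real^'m) set"
    and p :: "'x \<Rightarrow> real^'m \<Rightarrow> real \<Rightarrow> real"
    and \<gamma> :: real
    and n :: nat
    and X :: "nat \<Rightarrow> 'x"
    and M :: "'w measure"
    and Y :: "nat \<Rightarrow> 'w \<Rightarrow> real"
    and \<theta>0 :: "real^'m"
  assumes sigma_finite: "sigma_finite_measure Lam"
    and open_Theta: "open \<Theta>"
    and meas: "\<And>x \<theta>. \<theta> \<in> \<Theta> \<Longrightarrow> p x \<theta> \<in> borel_measurable Lam"
    and pos: "\<And>x \<theta> y. \<theta> \<in> \<Theta> \<Longrightarrow> y \<in> space Lam \<Longrightarrow> p x \<theta> y > 0"
    and dens_int: "\<And>x \<theta>. \<theta> \<in> \<Theta> \<Longrightarrow> integrable Lam (p x \<theta>)"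
    and dens_one: "\<And>x \<theta>. \<theta> \<in> \<Theta> \<Longrightarrow> (\<integral>y. p x \<theta> y \<partial>Lam) = 1"
    and diffble: "\<And>x \<theta> y. \<theta> \<in> \<Theta> \<Longrightarrow> y \<in> space Lam \<Longrightarrow>
                    (\<lambda>t. p x t y) differentiable (at \<theta>)"
    and diff_int: "diff_under_integral Lam \<Theta> (\<lambda>x t y. p x t y powr (\<gamma> + 1))"
    and gamma_ne0: "\<gamma> \<noteq> 0"
    and gamma_ne1: "\<gamma> \<noteq> -1"
    and welldef_int: "\<And>x \<theta>. \<theta> \<in> \<Theta> \<Longrightarrow> integrable Lam (\<lambda>y. p x \<theta> y powr (\<gamma> + 1))"
    and welldef_pos: "\<And>x \<theta>. \<theta> \<in> \<Theta> \<Longrightarrow> gamma_norm Lam p \<gamma> x \<theta> > 0"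
    and n_pos: "n > 0"
    and theta0: "\<theta>0 \<in> \<Theta>"
    and prob: "prob_space M"
    and true_distr: "\<And>i. i < n \<Longrightarrow>
                       distributed M Lam (Y i) (\<lambda>y. ennreal (p (X i) \<theta>0 y))"
  shows "(\<integral>\<omega>. gamma_est Lam p \<gamma> n X (\<lambda>i. Y i \<omega>) \<theta>0 \<partial>M) = 0"
proof -
  define a where "a = \<gamma> / (\<gamma> + 1)"
  define q where "q = (\<lambda>x t y. p x t y powr (\<gamma> + 1))"
  define N where "N = gamma_norm Lam p \<gamma>"
  define Dq where "Dq = (\<lambda>x y. frechet_derivative (\<lambda>t. q x t y) (at \<theta>0))"
  define DN where "DN = (\<lambda>x h. \<integral>y. Dq x y h \<partial>Lam)"
  define E where "E = (\<lambda>x y h. a * (q x \<theta>0 y / N x \<theta>0) powr (a - 1) *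
      ((Dq x y h * N x \<theta>0 - q x \<theta>0 y * DN x h) / (N x \<theta>0 * N x \<theta>0)))"
  have g1: "\<gamma> + 1 \<noteq> 0" using gamma_ne1 by simp
  have Npos: "N x \<theta>0 > 0" for x using welldef_pos[OF theta0] N_def by simp
  have hq: "((\<lambda>t. q x t y) has_derivative Dq x y) (at \<theta>0)" if y: "y \<in> space Lam" for x y
  proof -
    obtain D where D: "((\<lambda>t. p x t y) has_derivative D) (at \<theta>0)"
      using diffble[OF theta0 y] unfolding differentiable_def by blast
    have "((\<lambda>t. q x t y) has_derivative
       (\<lambda>h. (p x \<theta>0 y powr (\<gamma>+1)) * (0 * ln (p x \<theta>0 y) + D h * (\<gamma>+1) / p x \<theta>0 y))) (at \<theta>0)"
      unfolding q_def
      by (rule has_derivative_powr[OF D has_derivative_const pos[OF theta0 y]]) simp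
    then have "(\<lambda>t. q x t y) differentiable (at \<theta>0)" unfolding differentiable_def by blast
    then show ?thesis unfolding Dq_def by (simp add: frechet_derivative_works)
  qed
  have hN: "(N x has_derivative DN x) (at \<theta>0)" for x
  proof -
    have "N x = (\<lambda>t. \<integral>y. q x t y \<partial>Lam)" unfolding N_def q_def gamma_norm_def by (rule ext) simp
    then show ?thesis using diff_int theta0 unfolding diff_under_integral_def DN_def Dq_def q_def
      by auto
  qed
  have hG: "((\<lambda>t. gamma_expr Lam p \<gamma> x t y powr a) has_derivative E x y) (at \<theta>0)"
    if y: "y \<in> space Lam" for x y
  proof -
    have pp: "p x \<theta>0 y > 0" using pos[OF theta0 y] .
    have qpos: "q x \<theta>0 y > 0" unfolding q_def using pp by simp
    have rpos: "q x \<theta>0 y / N x \<theta>0 > 0" using qpos Npos[of x] by simp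
    have eq: "(\<lambda>t. gamma_expr Lam p \<gamma> x t y powr a) = (\<lambda>t. (q x t y / N x t) powr a)"
      by (simp add: gamma_expr_def q_def N_def)
    have "((\<lambda>t. (q x t y / N x t) powr a) has_derivative
      (\<lambda>h. (q x \<theta>0 y / N x \<theta>0) powr a * (0 * ln (q x \<theta>0 y / N x \<theta>0) +
         ((Dq x y h * N x \<theta>0 - q x \<theta>0 y * DN x h) / (N x \<theta>0 * N x \<theta>0)) * a / (q x \<theta>0 y / N x \<theta>0)))) (at \<theta>0)"
      by (rule has_derivative_powr[OF has_derivative_divide'[OF hq[OF y] hN] has_derivative_const])
        (use Npos[of x] rpos in auto)
    moreover have "(\<lambda>h. (q x \<theta>0 y / N x \<theta>0) powr a * (0 * ln (q x \<theta>0 y / N x \<theta>0) +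
         ((Dq x y h * N x \<theta>0 - q x \<theta>0 y * DN x h) / (N x \<theta>0 * N x \<theta>0)) * a / (q x \<theta>0 y / N x \<theta>0)))
       = E x y"
    proof
      fix h
      have "(q x \<theta>0 y / N x \<theta>0) powr (a - 1) = (q x \<theta>0 y / N x \<theta>0) powr a / (q x \<theta>0 y / N x \<theta>0)"
        using rpos qpos Npos[of x] by (simp add: powr_diff)
      then show "(q x \<theta>0 y / N x \<theta>0) powr a * (0 * ln (q x \<theta>0 y / N x \<theta>0) +
         ((Dq x y h * N x \<theta>0 - q x \<theta>0 y * DN x h) / (N x \<theta>0 * N x \<theta>0)) * a / (q x \<theta>0 y / N x \<theta>0))
         = E x y h" unfolding E_def by (simp add: mult.commute mult.left_commute)
    qed
    ultimately show ?thesis unfolding eq by simp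
  qed
  define K where "K = (\<lambda>x. a / N x \<theta>0 powr (a - 1) / (N x \<theta>0 * N x \<theta>0))"
  have pE: "p x \<theta>0 y * E x y h = K x * (Dq x y h * N x \<theta>0 - q x \<theta>0 y * DN x h)"
    if y: "y \<in> space Lam" for x y h
  proof -
    have ppos: "p x \<theta>0 y > 0" using pos[OF theta0 y] .
    have e1: "(\<gamma> + 1) * (a - 1) = -1" unfolding a_def using g1 by (simp add: field_simps)
    have "(q x \<theta>0 y / N x \<theta>0) powr (a - 1) = q x \<theta>0 y powr (a - 1) / N x \<theta>0 powr (a - 1)"
      using ppos Npos[of x] unfolding q_def by (simp add: powr_divide)
    also have "q x \<theta>0 y powr (a - 1) = p x \<theta>0 y powr (-1)"
      unfolding q_def using ppos e1 by (simp add: powr_powr)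
    finally have "p x \<theta>0 y * (q x \<theta>0 y / N x \<theta>0) powr (a - 1) = 1 / N x \<theta>0 powr (a - 1)"
      using ppos by (simp add: powr_minus_divide)
    note PR = this
    have "p x \<theta>0 y * E x y h = a * (p x \<theta>0 y * (q x \<theta>0 y / N x \<theta>0) powr (a - 1)) *
        ((Dq x y h * N x \<theta>0 - q x \<theta>0 y * DN x h) / (N x \<theta>0 * N x \<theta>0))"
      unfolding E_def by (simp only: mult_ac)
    also have "\<dots> = a * (1 / N x \<theta>0 powr (a - 1)) *
        ((Dq x y h * N x \<theta>0 - q x \<theta>0 y * DN x h) / (N x \<theta>0 * N x \<theta>0))"
      unfolding PR ..
    finally
    show ?thesis unfolding K_def by simp
  qed
  have Dqm: "(\<lambda>y. Dq x y h) \<in> borel_measurable Lam" and Dqi: "integrable Lam (\<lambda>y. Dq x y h)" for x h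
  proof -
    show "integrable Lam (\<lambda>y. Dq x y h)"
      using diff_int theta0 unfolding diff_under_integral_def Dq_def q_def by blast
    then show "(\<lambda>y. Dq x y h) \<in> borel_measurable Lam" by auto
  qed
  have qm: "q x \<theta>0 \<in> borel_measurable Lam" for x
    unfolding q_def using meas[OF theta0, of x] by measurable
  have qi: "integrable Lam (q x \<theta>0)" for x
    unfolding q_def using welldef_int[OF theta0] by blast
  have qint: "(\<integral>y. q x \<theta>0 y \<partial>Lam) = N x \<theta>0" for x
    unfolding q_def N_def gamma_norm_def ..
  have Em: "(\<lambda>y. E x y h) \<in> borel_measurable Lam" for x h
    unfolding E_def using qm[of x] Dqm[of x h] by measurable
  have exp0: "integrable M (\<lambda>\<omega>. E (X i) (Y i \<omega>) h) \<and> (\<integral>\<omega>. E (X i) (Y i \<omega>) h \<partial>M) = 0"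
    if i: "i < n" for i h
  proof -
    note td = true_distr[OF i]
    have nn: "\<And>y. y \<in> space Lam \<Longrightarrow> 0 \<le> p (X i) \<theta>0 y" using pos[OF theta0] less_imp_le by blast
    have i1: "integrable Lam (\<lambda>y. K (X i) * (Dq (X i) y h * N (X i) \<theta>0 - q (X i) \<theta>0 y * DN (X i) h))"
      using Dqi qi by auto
    have i2: "integrable Lam (\<lambda>y. p (X i) \<theta>0 y * E (X i) y h)"
      using i1 Bochner_Integration.integrable_cong[OF refl, of Lam "\<lambda>y. p (X i) \<theta>0 y * E (X i) y h"] pE by auto
    have "(\<integral>y. p (X i) \<theta>0 y * E (X i) y h \<partial>Lam) =
          (\<integral>y. K (X i) * (Dq (X i) y h * N (X i) \<theta>0 - q (X i) \<theta>0 y * DN (X i) h) \<partial>Lam)"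
      by (rule Bochner_Integration.integral_cong) (simp_all add: pE)
    also have "\<dots> = K (X i) * ((\<integral>y. Dq (X i) y h \<partial>Lam) * N (X i) \<theta>0 - (\<integral>y. q (X i) \<theta>0 y \<partial>Lam) * DN (X i) h)"
      using Dqi qi by simp
    also have "\<dots> = 0" unfolding qint DN_def by simp
    finally have "(\<integral>y. p (X i) \<theta>0 y * E (X i) y h \<partial>Lam) = 0" .
    then show ?thesis
      using distributed_integrable[OF td Em nn] distributed_integral[OF td Em nn] i2 by simp
  qed
  define c where "c = (\<lambda>h \<omega>. - (1 / real n) * (1 / \<gamma>) * (\<Sum>i<n. E (X i) (Y i \<omega>) h))"
  have Ysp: "Y i \<omega> \<in> space Lam" if "i < n" "\<omega> \<in> space M" for i \<omega>
    using measurable_space[OF distributed_measurable[OF true_distr[OF that(1)]] that(2)] .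
  have est: "gamma_est Lam p \<gamma> n X (\<lambda>i. Y i \<omega>) \<theta>0 = (\<Sum>j\<in>UNIV. c (axis j 1) \<omega> *\<^sub>R axis j 1)"
    if w: "\<omega> \<in> space M" for \<omega>
  proof -
    have L: "gamma_loss Lam p \<gamma> n X (\<lambda>i. Y i \<omega>) = (\<lambda>t. - (1 / real n) * (1 / \<gamma>) *
       (\<Sum>i<n. gamma_expr Lam p \<gamma> (X i) t (Y i \<omega>) powr a))"
      unfolding gamma_loss_def a_def by (rule ext) simp
    have "(gamma_loss Lam p \<gamma> n X (\<lambda>i. Y i \<omega>) has_derivative (\<lambda>h. c h \<omega>)) (at \<theta>0)"
      unfolding L c_def
      by (intro has_derivative_mult_right has_derivative_sum hG Ysp w) simp
    then have fd: "frechet_derivative (gamma_loss Lam p \<gamma> n X (\<lambda>i. Y i \<omega>)) (at \<theta>0) = (\<lambda>h. c h \<omega>)"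
      by (rule frechet_derivative_at[symmetric])
    have "gamma_est Lam p \<gamma> n X (\<lambda>i. Y i \<omega>) \<theta>0 = (\<chi> j. c (axis j 1) \<omega>)"
      unfolding gamma_est_def fd ..
    also have "\<dots> = (\<Sum>j\<in>UNIV. c (axis j 1) \<omega> *\<^sub>R axis j 1)"
      using basis_expansion[of "\<chi> j. c (axis j 1) \<omega>"] by (simp add: scalar_mult_eq_scaleR)
    finally show ?thesis .
  qed
  have ci: "integrable M (c h)" and c0: "(\<integral>\<omega>. c h \<omega> \<partial>M) = 0" for h
  proof -
    have "integrable M (\<lambda>\<omega>. E (X i) (Y i \<omega>) h)" if "i \<in> {..<n}" for i
      using exp0[of i h] that by simp
    then show "integrable M (c h)" unfolding c_def by (intro integrable_mult_right integrable_sum) auto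
    have "(\<integral>\<omega>. c h \<omega> \<partial>M) = - (1 / real n) * (1 / \<gamma>) * (\<Sum>i<n. \<integral>\<omega>. E (X i) (Y i \<omega>) h \<partial>M)"
      unfolding c_def using exp0 by (simp add: integral_sum)
    also have "\<dots> = 0" using exp0 by simp
    finally show "(\<integral>\<omega>. c h \<omega> \<partial>M) = 0" .
  qed
  have "(\<integral>\<omega>. gamma_est Lam p \<gamma> n X (\<lambda>i. Y i \<omega>) \<theta>0 \<partial>M) =
        (\<integral>\<omega>. (\<Sum>j\<in>UNIV. c (axis j 1) \<omega> *\<^sub>R axis j 1) \<partial>M)"
    by (rule Bochner_Integration.integral_cong) (simp_all add: est)
  also have "\<dots> = (\<Sum>j\<in>UNIV. (\<integral>\<omega>. c (axis j 1) \<omega> \<partial>M) *\<^sub>R axis j 1)"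
    using ci by (simp add: integral_sum)
  also have "\<dots> = 0" using c0 by simp
  finally show ?thesis .
qed
end
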